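(* (a) For $\mathbf{a}=(a_1,\dots,a_k)\in\mathbb{N}^k$, $$L^{(k+1)}(\mathbf{a})\le\min\left\{\tau_{k+1}(\mathbf{a})(\log2)^k,\ \prod_{i=1}^k(\log a_1+\cdots+\log a_i+\log2)\right\}.$$ (b) If $\mathbf{a},\mathbf{b}\in\mathbb{N}^k$ and $\gcd(a_1\cdots a_k,b_1\cdots b_k)=1$, then $L^{(k+1)}(a_1b_1,\dots,a_kb_k)\le\tau_{k+1}(\mathbf{a})L^{(k+1)}(\mathbf{b})$.
   Context: For $\mathbf{a}\in\mathbb{N}^k$, $L^{(k+1)}(\mathbf{a})$ is the $k$-dimensional Lebesgue measure of $\bigcup[\log(d_1/2),\log d_1)\times\cdots\times[\log(d_k/2),\log d_k)$, the union over all $(d_1,\dots,d_k)\in\mathbb{N}^k$ with $d_1\cdots d_i\mid a_1\cdots a_i$ for $1\le i\le k$. $\tau_{k+1}(\mathbf{a})=|\{(d_1,\dots,d_k)\in\mathbb{N}^k: d_1\cdots d_i\mid a_1\cdots a_i\ (1\le i\le k)\}|$. *)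

theory Defs
  imports "HOL-Analysis.Analysis" "HOL-Probability.Probability"
begin

text \<open>Tuples in N^k are functions nat => nat, only the values at indices 0..k-1
  (i.e. a_1..a_k shifted to 0-based) matter.  The condition
  d_1...d_i | a_1...a_i for 1 <= i <= k becomes prod over {..i} for i < k.\<close>

definition divtuples :: "nat \<Rightarrow> (nat \<Rightarrow> nat) \<Rightarrow> (nat \<Rightarrow> nat) set" where
  "divtuples k a = {d \<in> Pi\<^sub>E {..<k} (\<lambda>_. {1..}).
      \<forall>i<k. (\<Prod>j\<le>i. d j) dvd (\<Prod>j\<le>i. a j)}"

definition tau :: "nat \<Rightarrow> (nat \<Rightarrow> nat) \<Rightarrow> nat" where
  "tau k a = card (divtuples k a)"

definition Lmeas :: "nat \<Rightarrow> (nat \<Rightarrow> nat) \<Rightarrow> real" where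
  "Lmeas k a = measure (Pi\<^sub>M {..<k} (\<lambda>_. lborel))
     (\<Union>d\<in>divtuples k a. Pi\<^sub>E {..<k} (\<lambda>i. {ln (real (d i) / 2) ..< ln (real (d i))}))"

end

theory Submission imports Defs begin

definition tele :: "(nat \<Rightarrow> nat) \<Rightarrow> nat \<Rightarrow> nat" where
  "tele E i = (case i of 0 \<Rightarrow> E 0 | Suc j \<Rightarrow> E (Suc j) div E j)"

lemma tele_prod:
  assumes pos: "\<And>i. i<k \<Longrightarrow> E i > 0" and dv: "\<And>i. Suc i < k \<Longrightarrow> E i dvd E (Suc i)"
  shows "i<k \<Longrightarrow> (\<Prod>j\<le>i. tele E j) = E i"
proof (induction i)
  case 0 then show ?case by (simp add: tele_def)
next
  case (Suc i)
  then have "(\<Prod>j\<le>Suc i. tele E j) = E i * (E (Suc i) div E i)"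
    by (simp add: tele_def)
  also have "\<dots> = E (Suc i)" using dv[OF Suc.prems] by simp
  finally show ?case .
qed

lemma tele_pos:
  assumes pos: "\<And>i. i<k \<Longrightarrow> E i > 0" and dv: "\<And>i. Suc i < k \<Longrightarrow> E i dvd E (Suc i)"
  shows "i<k \<Longrightarrow> tele E i > 0"
proof (cases i)
  case 0 then show "i<k \<Longrightarrow> tele E i > 0" using pos by (simp add: tele_def)
next
  case (Suc j)
  assume "i < k"
  then have "E j dvd E (Suc j)" "E (Suc j) > 0" using dv pos Suc by auto
  then show ?thesis using Suc by (auto simp: tele_def elim!: dvdE)
qed

lemma tele_divtuples:
  assumes pos: "\<And>i. i<k \<Longrightarrow> E i > 0" and dv: "\<And>i. Suc i < k \<Longrightarrow> E i dvd E (Suc i)"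
    and da: "\<And>i. i<k \<Longrightarrow> E i dvd (\<Prod>j\<le>i. a j)"
  shows "restrict (tele E) {..<k} \<in> divtuples k a"
proof -
  have "(\<Prod>j\<le>i. restrict (tele E) {..<k} j) = E i" if "i < k" for i
  proof -
    have "(\<Prod>j\<le>i. restrict (tele E) {..<k} j) = (\<Prod>j\<le>i. tele E j)"
      using that by (intro prod.cong) auto
    then show ?thesis using tele_prod[where k=k and E=E, OF pos dv that] by simp
  qed
  moreover have "restrict (tele E) {..<k} \<in> Pi\<^sub>E {..<k} (\<lambda>_. {1..})"
    using tele_pos[where k=k and E=E, OF pos dv] by (auto simp: Suc_le_eq)
  ultimately show ?thesis using da unfolding divtuples_def by auto
qed

lemma coprime_split:
  "coprime (A::nat) B \<Longrightarrow> D dvd A * B \<Longrightarrow> D = gcd D A * gcd D B"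
  by (smt (verit, best) coprime_commute coprime_divisors
    coprime_dvd_mult_left_iff division_decomp dvd_triv_left gcd.commute
    gcd_mult_right_left_cancel gcd_mult_right_right_cancel
    gcd_nat.absorb_iff2)

lemma decomp:
  fixes a b d :: "nat \<Rightarrow> nat"
  assumes apos: "\<forall>i<k. a i > 0" and bpos: "\<forall>i<k. b i > 0"
    and cop: "coprime (\<Prod>i<k. a i) (\<Prod>i<k. b i)"
    and d: "d \<in> divtuples k (\<lambda>i. a i * b i)"
  shows "\<exists>e\<in>divtuples k a. \<exists>f\<in>divtuples k b. \<forall>i<k. d i = e i * f i"
proof -
  define D where "D i = (\<Prod>j\<le>i. d j)" for i
  define A where "A i = (\<Prod>j\<le>i. a j)" for i
  define B where "B i = (\<Prod>j\<le>i. b j)" for i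
  define E where "E i = gcd (D i) (A i)" for i
  define F where "F i = gcd (D i) (B i)" for i
  have dpos: "d i > 0" if "i < k" for i
    using d that unfolding divtuples_def by (auto simp: PiE_def Pi_def)
  have Dpos: "D i > 0" if "i < k" for i
    using dpos that unfolding D_def by (auto intro!: prod_pos)
  have Apos: "A i > 0" if "i < k" for i
    using apos that unfolding A_def by (auto intro!: prod_pos)
  have Bpos: "B i > 0" if "i < k" for i
    using bpos that unfolding B_def by (auto intro!: prod_pos)
  have Epos: "E i > 0" if "i < k" for i using Dpos[OF that] by (simp add: E_def)
  have Fpos: "F i > 0" if "i < k" for i using Dpos[OF that] by (simp add: F_def)
  have DAB: "D i dvd A i * B i" if "i < k" for i
    using d that unfolding divtuples_def D_def A_def B_def by (auto simp: prod.distrib)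
  have copi: "coprime (A i) (B i)" if "i < k" for i
  proof -
    have "A i dvd (\<Prod>i<k. a i)" "B i dvd (\<Prod>i<k. b i)"
      unfolding A_def B_def using that by (auto intro!: prod_dvd_prod_subset)
    then show ?thesis using cop coprime_divisors by blast
  qed
  have DEF: "D i = E i * F i" if "i < k" for i
    using coprime_split[OF copi[OF that] DAB[OF that]] by (simp add: E_def F_def)
  have DS: "D (Suc i) = D i * d (Suc i)" for i by (simp add: D_def)
  have AS: "A (Suc i) = A i * a (Suc i)" for i by (simp add: A_def)
  have BS: "B (Suc i) = B i * b (Suc i)" for i by (simp add: B_def)
  have Edv: "E i dvd E (Suc i)" for i
    unfolding E_def by (metis DS AS dvd_mult2 gcd_dvd1 gcd_dvd2 gcd_greatest)
  have Fdv: "F i dvd F (Suc i)" for i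
    unfolding F_def by (metis DS BS dvd_mult2 gcd_dvd1 gcd_dvd2 gcd_greatest)
  have eT: "restrict (tele E) {..<k} \<in> divtuples k a"
    using Edv by (intro tele_divtuples[where k=k and E=E, OF Epos]) (auto simp: E_def A_def)
  have fT: "restrict (tele F) {..<k} \<in> divtuples k b"
    using Fdv by (intro tele_divtuples[where k=k and E=F, OF Fpos]) (auto simp: F_def B_def)
  have "d i = tele E i * tele F i" if "i < k" for i
  proof (cases i)
    case 0 then show ?thesis using DEF[OF that] by (simp add: tele_def D_def)
  next
    case (Suc j)
    have jk: "j < k" using Suc that by simp
    have e1: "E (Suc j) = E j * tele E (Suc j)" using Edv[of j] by (simp add: tele_def)
    have f1: "F (Suc j) = F j * tele F (Suc j)" using Fdv[of j] by (simp add: tele_def)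
    have "D (Suc j) = D j * (tele E (Suc j) * tele F (Suc j))"
      using DEF[OF that[unfolded Suc]] DEF[OF jk] e1 f1 by (simp add: ac_simps)
    then have "D j * d (Suc j) = D j * (tele E (Suc j) * tele F (Suc j))"
      using DS[of j] by metis
    then show ?thesis using Dpos[OF jk] Suc by (simp; metis)
  qed
  then show ?thesis using eT fT by (intro bexI[OF _ eT] bexI[OF _ fT]) auto
qed

abbreviation PL :: "nat \<Rightarrow> (nat \<Rightarrow> real) measure" where
  "PL k \<equiv> Pi\<^sub>M {..<k} (\<lambda>_. lborel)"

lemma emeasure_box:
  assumes "\<And>i. i < k \<Longrightarrow> l i \<le> u i"
  shows "emeasure (PL k) (Pi\<^sub>E {..<k} (\<lambda>i. {l i..<u i})) = ennreal (\<Prod>i<k. u i - l i)"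
proof -
  interpret product_sigma_finite "\<lambda>_. lborel :: real measure" by standard
  have "emeasure (PL k) (Pi\<^sub>E {..<k} (\<lambda>i. {l i..<u i})) = (\<Prod>i<k. emeasure lborel {l i..<u i})"
    by (rule emeasure_PiM) auto
  also have "\<dots> = (\<Prod>i<k. ennreal (u i - l i))"
    using assms by (intro prod.cong) auto
  also have "\<dots> = ennreal (\<Prod>i<k. u i - l i)"
    using assms by (subst prod_ennreal) auto
  finally show ?thesis .
qed

lemma box_sets: "Pi\<^sub>E {..<k} (\<lambda>i. {l i..<u i}) \<in> sets (PL k)"
  by (rule sets_PiM_I_finite) auto

lemma box_fmeas:
  assumes "\<And>i. i < k \<Longrightarrow> l i \<le> u i"
  shows "Pi\<^sub>E {..<k} (\<lambda>i. {l i..<u i}) \<in> fmeasurable (PL k)"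
  using emeasure_box[OF assms] box_sets by (intro fmeasurableI) auto

lemma measure_box:
  assumes "\<And>i. i < k \<Longrightarrow> l i \<le> u i"
  shows "measure (PL k) (Pi\<^sub>E {..<k} (\<lambda>i. {l i..<u i})) = (\<Prod>i<k. u i - l i)"
proof -
  have "0 \<le> (\<Prod>i<k. u i - l i)" using assms by (intro prod_nonneg) auto
  then show ?thesis using emeasure_box[OF assms] unfolding measure_def by simp
qed

lemma translate_PL:
  fixes c :: "nat \<Rightarrow> real"
  shows "distr (PL k) (PL k) (\<lambda>x. restrict (\<lambda>i. x i + c i) {..<k}) = PL k"
proof -
  interpret product_sigma_finite "\<lambda>_. lborel :: real measure" by standard
  let ?T = "\<lambda>x. restrict (\<lambda>i. x i + c i) {..<k}"
  have Tm: "?T \<in> measurable (PL k) (PL k)" by measurable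
  show ?thesis
  proof (rule PiM_eqI)
    show "sets (distr (PL k) (PL k) ?T) = sets (PL k)" by simp
  next
    fix A assume A: "\<And>i. i \<in> {..<k} \<Longrightarrow> A i \<in> sets (lborel :: real measure)"
    have "emeasure (distr (PL k) (PL k) ?T) (Pi\<^sub>E {..<k} A) =
        emeasure (PL k) (?T -` Pi\<^sub>E {..<k} A \<inter> space (PL k))"
      using A by (intro emeasure_distr Tm sets_PiM_I_finite) auto
    also have "?T -` Pi\<^sub>E {..<k} A \<inter> space (PL k) = Pi\<^sub>E {..<k} (\<lambda>i. (\<lambda>x. c i + x) -` A i)"
      by (auto simp: space_PiM PiE_def Pi_def extensional_def add.commute)
    also have "emeasure (PL k) \<dots> = (\<Prod>i<k. emeasure lborel ((\<lambda>x. c i + x) -` A i))"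
      using A by (intro emeasure_PiM) (auto intro!: measurable_sets_borel[OF _ A])
    also have "\<dots> = (\<Prod>i<k. emeasure lborel (A i))"
    proof (intro prod.cong refl)
      fix i assume i: "i \<in> {..<k}"
      have "emeasure lborel (A i) = emeasure (distr lborel borel ((+) (c i))) (A i)"
        by (simp add: lborel_distr_plus)
      also have "\<dots> = emeasure lborel ((+) (c i) -` A i \<inter> space lborel)"
        using A[OF i] by (intro emeasure_distr) auto
      finally show "emeasure lborel ((\<lambda>x. c i + x) -` A i) = emeasure lborel (A i)" by simp
    qed
    finally show "emeasure (distr (PL k) (PL k) ?T) (Pi\<^sub>E {..<k} A) = (\<Prod>i\<in>{..<k}. emeasure lborel (A i))" .
  qed simp
qed

definition boxd :: "nat \<Rightarrow> (nat \<Rightarrow> nat) \<Rightarrow> (nat \<Rightarrow> real) set" where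
  "boxd k d = Pi\<^sub>E {..<k} (\<lambda>i. {ln (real (d i) / 2) ..< ln (real (d i))})"

lemma Lmeas_boxd: "Lmeas k a = measure (PL k) (\<Union>d\<in>divtuples k a. boxd k d)"
  unfolding Lmeas_def boxd_def ..

lemma divtuples_ge1: "d \<in> divtuples k a \<Longrightarrow> i < k \<Longrightarrow> d i \<ge> 1"
  unfolding divtuples_def by (auto simp: PiE_def Pi_def)

lemma divtuples_le:
  assumes d: "d \<in> divtuples k a" and apos: "\<forall>i<k. a i > 0" and i: "i < k"
  shows "d i \<le> (\<Prod>j\<le>i. a j)"
proof -
  have "d i dvd (\<Prod>j\<le>i. d j)" by (rule dvd_prodI) auto
  also have "(\<Prod>j\<le>i. d j) dvd (\<Prod>j\<le>i. a j)" using d i unfolding divtuples_def by auto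
  finally have "d i dvd (\<Prod>j\<le>i. a j)" .
  moreover have "(\<Prod>j\<le>i. a j) > 0" using apos i by (auto intro!: prod_pos)
  ultimately show ?thesis by (rule dvd_imp_le)
qed

lemma divtuples_finite:
  assumes apos: "\<forall>i<k. a i > 0"
  shows "finite (divtuples k a)"
proof -
  define M where "M = (\<Prod>i<k. a i)"
  have "divtuples k a \<subseteq> Pi\<^sub>E {..<k} (\<lambda>_. {..M})"
  proof
    fix d assume d: "d \<in> divtuples k a"
    have "d i \<le> M" if "i < k" for i
    proof -
      have "(\<Prod>j\<le>i. a j) dvd M" unfolding M_def using that by (auto intro!: prod_dvd_prod_subset)
      moreover have "M > 0" unfolding M_def using apos by (auto intro!: prod_pos)
      ultimately have "(\<Prod>j\<le>i. a j) \<le> M" by (rule dvd_imp_le)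
      then show ?thesis using divtuples_le[OF d apos that] by simp
    qed
    moreover have "d \<in> extensional {..<k}" using d unfolding divtuples_def by (auto simp: PiE_def)
    ultimately show "d \<in> Pi\<^sub>E {..<k} (\<lambda>_. {..M})" by (auto simp: PiE_def Pi_def)
  qed
  moreover have "finite (Pi\<^sub>E {..<k} (\<lambda>_. {..M}))" by (intro finite_PiE) auto
  ultimately show ?thesis by (rule finite_subset)
qed

lemma boxd_sets: "boxd k d \<in> sets (PL k)"
  unfolding boxd_def by (rule box_sets)

lemma measure_boxd:
  assumes "\<And>i. i < k \<Longrightarrow> d i \<ge> 1"
  shows "measure (PL k) (boxd k d) = (ln 2) ^ k"
proof -
  have eq: "ln (real (d i)) - ln (real (d i) / 2) = ln 2" if "i < k" for i
    using assms[OF that] by (simp add: ln_div)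
  have l2: "0 < ln (2::real)" by simp
  have le: "ln (real (d i) / 2) \<le> ln (real (d i))" if "i < k" for i
    using eq[OF that] l2 by linarith
  have "measure (PL k) (boxd k d) = (\<Prod>i<k. ln (real (d i)) - ln (real (d i) / 2))"
    unfolding boxd_def
    by (rule measure_box[of k "\<lambda>i. ln (real (d i) / 2)" "\<lambda>i. ln (real (d i))"])
       (use le in auto)
  also have "\<dots> = (\<Prod>i<k. ln 2)" using eq by (intro prod.cong) auto
  finally show ?thesis by simp
qed

lemma Ua_sets:
  assumes apos: "\<forall>i<k. a i > 0"
  shows "(\<Union>d\<in>divtuples k a. boxd k d) \<in> sets (PL k)"
  using divtuples_finite[OF apos] by (intro sets.finite_UN) (auto intro: boxd_sets)

lemma Ua_subset:
  assumes apos: "\<forall>i<k. a i > 0"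
  shows "(\<Union>d\<in>divtuples k a. boxd k d) \<subseteq> Pi\<^sub>E {..<k} (\<lambda>i. {- ln 2 ..< (\<Sum>j\<le>i. ln (real (a j)))})"
proof
  fix x assume "x \<in> (\<Union>d\<in>divtuples k a. boxd k d)"
  then obtain d where d: "d \<in> divtuples k a" and x: "x \<in> boxd k d" by blast
  show "x \<in> Pi\<^sub>E {..<k} (\<lambda>i. {- ln 2 ..< (\<Sum>j\<le>i. ln (real (a j)))})"
  proof (rule PiE_I)
    fix i assume "i \<in> {..<k}"
    then have i: "i < k" by simp
    have d1: "d i \<ge> 1" by (rule divtuples_ge1[OF d i])
    have "x i \<in> {ln (real (d i) / 2) ..< ln (real (d i))}"
      using PiE_mem[OF x[unfolded boxd_def]] i by blast
    then have xi: "ln (real (d i) / 2) \<le> x i" "x i < ln (real (d i))" by auto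
    have "ln (real (d i) / 2) = ln (real (d i)) - ln 2" using d1 by (intro ln_divide_pos) auto
    moreover have "0 \<le> ln (real (d i))" using d1 by (intro ln_ge_zero) auto
    ultimately have "- ln 2 \<le> ln (real (d i) / 2)" by linarith
    moreover have "ln (real (d i)) \<le> ln (real (\<Prod>j\<le>i. a j))"
    proof (rule ln_mono)
      show "real (d i) \<le> real (\<Prod>j\<le>i. a j)" using divtuples_le[OF d apos i] by (simp only: of_nat_le_iff)
      show "0 < real (d i)" using d1 by simp
    qed
    moreover have "ln (real (\<Prod>j\<le>i. a j)) = (\<Sum>j\<le>i. ln (real (a j)))"
    proof -
      have aj: "\<And>j. j \<le> i \<Longrightarrow> a j > 0" using apos i by (meson le_less_trans)
      have "ln (real (\<Prod>j\<le>i. a j)) = ln (\<Prod>j\<le>i. real (a j))" by simp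
      also have "\<dots> = (\<Sum>j\<le>i. ln (real (a j)))" by (rule ln_prod) (auto dest: aj)
      finally show ?thesis .
    qed
    ultimately show "x i \<in> {- ln 2 ..< (\<Sum>j\<le>i. ln (real (a j)))}" using xi by simp
  next
    fix i assume "i \<notin> {..<k}"
    then show "x i = undefined" using PiE_arb[OF x[unfolded boxd_def]] by blast
  qed
qed

lemma S_nonneg: "\<forall>i<k. (a::nat\<Rightarrow>nat) i > 0 \<Longrightarrow> i < k \<Longrightarrow> 0 \<le> (\<Sum>j\<le>i. ln (real (a j)))"
proof (intro sum_nonneg)
  fix j assume A: "\<forall>i<k. a i > 0" "i < k" "j \<in> {..i}"
  then have "j < k" by auto
  with A(1) have "a j > 0" by blast
  then show "0 \<le> ln (real (a j))" by (intro ln_ge_zero) auto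
qed

lemma S_ge: "\<forall>i<k. (a::nat\<Rightarrow>nat) i > 0 \<Longrightarrow> i < k \<Longrightarrow> - ln 2 \<le> (\<Sum>j\<le>i. ln (real (a j)))"
proof -
  assume "\<forall>i<k. a i > 0" "i < k"
  then have "0 \<le> (\<Sum>j\<le>i. ln (real (a j)))" by (rule S_nonneg)
  moreover have "0 < ln (2::real)" by simp
  ultimately show ?thesis by linarith
qed

lemma Ua_fmeas:
  assumes apos: "\<forall>i<k. a i > 0"
  shows "(\<Union>d\<in>divtuples k a. boxd k d) \<in> fmeasurable (PL k)"
proof (rule fmeasurableI2[OF _ Ua_subset[OF apos] Ua_sets[OF apos]])
  show "Pi\<^sub>E {..<k} (\<lambda>i. {- ln 2 ..< (\<Sum>j\<le>i. ln (real (a j)))}) \<in> fmeasurable (PL k)"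
    by (rule box_fmeas) (erule S_ge[OF apos])
qed

lemma partA1:
  assumes apos: "\<forall>i<k. a i > 0"
  shows "Lmeas k a \<le> real (tau k a) * (ln 2) ^ k"
proof -
  have "Lmeas k a \<le> (\<Sum>d\<in>divtuples k a. measure (PL k) (boxd k d))"
    unfolding Lmeas_boxd by (rule measure_UNION_le[OF divtuples_finite[OF apos]]) (rule boxd_sets)
  also have "\<dots> = (\<Sum>d\<in>divtuples k a. (ln 2) ^ k)"
    by (intro sum.cong refl measure_boxd) (auto dest: divtuples_ge1)
  finally show ?thesis by (simp add: tau_def)
qed

lemma partA2:
  assumes apos: "\<forall>i<k. a i > 0"
  shows "Lmeas k a \<le> (\<Prod>i<k. (\<Sum>j\<le>i. ln (real (a j))) + ln 2)"
proof -
  have "Lmeas k a \<le> measure (PL k) (Pi\<^sub>E {..<k} (\<lambda>i. {- ln 2 ..< (\<Sum>j\<le>i. ln (real (a j)))}))"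
    unfolding Lmeas_boxd
    by (rule measure_mono_fmeasurable[OF Ua_subset[OF apos] Ua_sets[OF apos]])
       (rule box_fmeas, erule S_ge[OF apos])
  also have "\<dots> = (\<Prod>i<k. (\<Sum>j\<le>i. ln (real (a j))) - - ln 2)"
    by (rule measure_box) (erule S_ge[OF apos])
  finally show ?thesis by simp
qed

lemma partB:
  assumes apos: "\<forall>i<k. a i > 0" and bpos: "\<forall>i<k. b i > 0"
    and cop: "coprime (\<Prod>i<k. a i) (\<Prod>i<k. b i)"
  shows "Lmeas k (\<lambda>i. a i * b i) \<le> real (tau k a) * Lmeas k b"
proof -
  let ?U = "\<Union>d\<in>divtuples k b. boxd k d"
  define Tr where "Tr e = (\<lambda>x. restrict (\<lambda>i. x i + (- ln (real (e i)))) {..<k})" for e :: "nat\<Rightarrow>nat"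
  have Tm: "Tr e \<in> measurable (PL k) (PL k)" for e unfolding Tr_def by measurable
  have abpos: "\<forall>i<k. a i * b i > 0" using apos bpos by auto
  have Ufm: "?U \<in> fmeasurable (PL k)" by (rule Ua_fmeas[OF bpos])
  have Usets: "?U \<in> sets (PL k)" by (rule Ua_sets[OF bpos])
  have deq: "distr (PL k) (PL k) (Tr e) = PL k" for e unfolding Tr_def by (rule translate_PL)
  have piece_meas: "measure (PL k) (Tr e -` ?U \<inter> space (PL k)) = measure (PL k) ?U" for e
    using measure_distr[OF Tm Usets, of e] deq[of e] by simp
  have piece_fm: "Tr e -` ?U \<inter> space (PL k) \<in> fmeasurable (PL k)" for e
  proof (rule fmeasurableI)
    show "Tr e -` ?U \<inter> space (PL k) \<in> sets (PL k)" by (rule measurable_sets[OF Tm Usets])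
    have "emeasure (PL k) (Tr e -` ?U \<inter> space (PL k)) = emeasure (PL k) ?U"
      using emeasure_distr[OF Tm Usets, of e] deq[of e] by simp
    also have "\<dots> < \<infinity>" using Ufm by (simp add: fmeasurable_def)
    finally show "emeasure (PL k) (Tr e -` ?U \<inter> space (PL k)) < \<infinity>" .
  qed
  have sub: "(\<Union>d\<in>divtuples k (\<lambda>i. a i * b i). boxd k d) \<subseteq> (\<Union>e\<in>divtuples k a. (Tr e -` ?U \<inter> space (PL k)))"
  proof
    fix x assume "x \<in> (\<Union>d\<in>divtuples k (\<lambda>i. a i * b i). boxd k d)"
    then obtain d where d: "d \<in> divtuples k (\<lambda>i. a i * b i)" and x: "x \<in> boxd k d" by blast
    obtain e f where e: "e \<in> divtuples k a" and f: "f \<in> divtuples k b" and def: "\<forall>i<k. d i = e i * f i"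
      using decomp[OF apos bpos cop d] by blast
    have "Tr e x \<in> boxd k f"
      unfolding boxd_def
    proof (rule PiE_I)
      fix i assume "i \<in> {..<k}"
      then have i: "i < k" by simp
      have e1: "e i \<ge> 1" "f i \<ge> 1" using divtuples_ge1[OF e i] divtuples_ge1[OF f i] by auto
      have ep: "real (e i) > 0" "real (f i) > 0" using e1 by auto
      have dr: "real (d i) = real (e i) * real (f i)" using def i by simp
      have l1: "ln (real (d i)) = ln (real (e i)) + ln (real (f i))"
        unfolding dr using ep by (rule ln_mult_pos)
      have l2: "ln (real (d i) / 2) = ln (real (d i)) - ln 2"
        using ep unfolding dr by (intro ln_divide_pos) auto
      have l3: "ln (real (f i) / 2) = ln (real (f i)) - ln 2"
        using ep by (intro ln_divide_pos) auto
      have "x i \<in> {ln (real (d i) / 2) ..< ln (real (d i))}"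
        using PiE_mem[OF x[unfolded boxd_def]] i by blast
      then have xi: "ln (real (d i)/2) \<le> x i" "x i < ln (real (d i))" by auto
      have T: "Tr e x i = x i - ln (real (e i))" using i by (simp add: Tr_def)
      have "ln (real (f i)/2) \<le> Tr e x i" "Tr e x i < ln (real (f i))"
        unfolding T using xi l1 l2 l3 by linarith+
      then show "Tr e x i \<in> {ln (real (f i)/2)..<ln (real (f i))}" by simp
    next
      fix i assume "i \<notin> {..<k}"
      then show "Tr e x i = undefined" by (simp add: Tr_def)
    qed
    then have TU: "Tr e x \<in> ?U" by (rule UN_I[OF f])
    have xs: "x \<in> space (PL k)" using sets.sets_into_space[OF boxd_sets] x by blast
    show "x \<in> (\<Union>e\<in>divtuples k a. (Tr e -` ?U \<inter> space (PL k)))"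
      using e TU xs by blast
  qed
  have "Lmeas k (\<lambda>i. a i * b i) \<le> measure (PL k) (\<Union>e\<in>divtuples k a. (Tr e -` ?U \<inter> space (PL k)))"
    unfolding Lmeas_boxd
    by (rule measure_mono_fmeasurable[OF sub Ua_sets[OF abpos]])
       (rule fmeasurable.finite_UN[OF divtuples_finite[OF apos] piece_fm])
  also have "\<dots> \<le> (\<Sum>e\<in>divtuples k a. measure (PL k) (Tr e -` ?U \<inter> space (PL k)))"
    by (rule measure_UNION_le[OF divtuples_finite[OF apos]]) (use piece_fm in auto)
  also have "\<dots> = real (tau k a) * Lmeas k b" using piece_meas by (simp add: tau_def Lmeas_boxd)
  finally show ?thesis .
qed

theorem lemma2p1:
  fixes k :: nat
  shows "(\<forall>a. (\<forall>i<k. a i > 0) \<longrightarrow>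
            Lmeas k a \<le> min (real (tau k a) * (ln 2) ^ k)
                             (\<Prod>i<k. (\<Sum>j\<le>i. ln (real (a j))) + ln 2)) \<and>
         (\<forall>a b. (\<forall>i<k. a i > 0) \<and> (\<forall>i<k. b i > 0) \<and>
            coprime (\<Prod>i<k. a i) (\<Prod>i<k. b i) \<longrightarrow>
            Lmeas k (\<lambda>i. a i * b i) \<le> real (tau k a) * Lmeas k b)"
  using partA1 partA2 partB by auto

end
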